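(* Let $q\ge 2$, $F,P,m>0$, and consider positive reals $f_1,\dots,f_q,p_1,\dots,p_q$ subject to $\sum_i f_i=F$, $\sum_i p_i=P$, $f_1p_1\ge f_2p_2\ge\dots\ge f_qp_q$, and $f_1p_1\le m$. Then the supremum of $\sum_{i=1}^q f_ip_i$ under these constraints equals $f_{\max}(F,P,m)=FP$ if $FP\le m$; $\;um+(\sqrt{FP}-u\sqrt m)^2$ if $\frac{FP}{(u+1)^2}\le m<\frac{FP}{u^2}$ for some $u\in\{1,\dots,q-1\}$; $\;mq$ if $m<\frac{FP}{q^2}$. *)

theory Defs
  imports Complex_Main
begin

text \<open>Feasible values of the objective: sums over indices 0..q-1 (paper's 1..q).\<close>
definition feasible_sums :: "nat \<Rightarrow> real \<Rightarrow> real \<Rightarrow> real \<Rightarrow> real set" where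
  "feasible_sums q F P m =
     {(\<Sum>i<q. f i * p i) | f p.
        (\<forall>i<q. f i > 0 \<and> p i > 0) \<and>
        (\<Sum>i<q. f i) = F \<and> (\<Sum>i<q. p i) = P \<and>
        (\<forall>i. Suc i < q \<longrightarrow> f (Suc i) * p (Suc i) \<le> f i * p i) \<and>
        f 0 * p 0 \<le> m}"

end

theory Submission
  imports Defs
begin

lemma key_ineq:
  fixes s :: "nat \<Rightarrow> real" and I :: "nat set" and u :: nat
  assumes fin: "finite I" and bnd: "\<forall>i\<in>I. 0 \<le> s i \<and> s i \<le> M"
    and sumS: "sum s I \<le> S" and Sdef: "S = real u * M + t" and t0: "0 \<le> t" and tM: "t \<le> M"
  shows "(\<Sum>i\<in>I. (s i)^2) \<le> real u * M^2 + t^2"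
proof -
  define A where "A = {i\<in>I. t \<le> s i}"
  define k where "k = card A"
  define T where "T = sum s A"
  have AI: "A \<subseteq> I" and finA: "finite A" using fin by (auto simp: A_def)
  have split: "(\<Sum>i\<in>I. (s i)^2) = (\<Sum>i\<in>A. (s i)^2) + (\<Sum>i\<in>I-A. (s i)^2)"
    using fin AI by (metis sum.subset_diff add.commute)
  have splits: "sum s I = T + sum s (I - A)"
    using fin AI unfolding T_def by (metis sum.subset_diff add.commute)
  have h1: "(\<Sum>i\<in>A. (s i)^2) \<le> (\<Sum>i\<in>A. (M + t) * s i - M * t)"
  proof (rule sum_mono)
    fix i assume "i \<in> A"
    hence "t \<le> s i" "s i \<le> M" using bnd by (auto simp: A_def)
    hence "(s i - M) * (s i - t) \<le> 0" by (simp add: mult_nonpos_nonneg)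
    thus "(s i)^2 \<le> (M + t) * s i - M * t" by (simp add: power2_eq_square algebra_simps)
  qed
  have h2: "(\<Sum>i\<in>I-A. (s i)^2) \<le> (\<Sum>i\<in>I-A. t * s i)"
  proof (rule sum_mono)
    fix i assume "i \<in> I - A"
    hence "s i < t" "0 \<le> s i" using bnd by (auto simp: A_def)
    thus "(s i)^2 \<le> t * s i" by (simp add: power2_eq_square mult_right_mono)
  qed
  have e1: "(\<Sum>i\<in>A. (M + t) * s i - M * t) = (M + t) * T - real k * M * t"
    by (simp add: sum_subtractf sum_distrib_left[symmetric] T_def k_def)
  have e2: "(\<Sum>i\<in>I-A. t * s i) = t * sum s (I - A)"
    by (simp add: sum_distrib_left)
  have tot: "(\<Sum>i\<in>I. (s i)^2) \<le> t * sum s I + M * (T - real k * t)"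
    using split h1 h2 e1 e2 splits by (simp add: algebra_simps)
  have ts: "t * sum s I \<le> t * S" using sumS t0 by (simp add: mult_left_mono)
  have T0: "0 \<le> T" unfolding T_def using bnd AI by (intro sum_nonneg) auto
  have TkM: "T \<le> real k * M" unfolding T_def k_def
    using sum_bounded_above[of A s M] bnd AI by auto
  have "0 \<le> sum s (I - A)" using bnd by (intro sum_nonneg) auto
  hence TS: "T \<le> S" using splits sumS by linarith
  have M0: "0 \<le> M" using t0 tM by simp
  show ?thesis
  proof (cases "k \<le> u")
    case True
    have "M * (T - real k * t) \<le> M * (real k * (M - t))"
      using TkM M0 by (intro mult_left_mono) (auto simp: algebra_simps)
    also have "\<dots> \<le> M * (real u * (M - t))"
      using True M0 tM by (intro mult_left_mono mult_right_mono) auto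
    finally have "M * (T - real k * t) \<le> M * (real u * (M - t))" .
    thus ?thesis using tot ts Sdef by (simp add: power2_eq_square algebra_simps)
  next
    case False
    hence "real u + 1 \<le> real k" by simp
    hence "(real u + 1) * t \<le> real k * t" using t0 by (simp add: mult_right_mono)
    hence "M * (T - real k * t) \<le> M * (S - (real u + 1) * t)"
      using TS M0 by (intro mult_left_mono) auto
    thus ?thesis using tot ts Sdef by (simp add: power2_eq_square algebra_simps)
  qed
qed


lemma le_first:
  fixes g :: "nat \<Rightarrow> real"
  assumes "\<forall>i. Suc i < q \<longrightarrow> g (Suc i) \<le> g i"
  shows "i < q \<Longrightarrow> g i \<le> g 0"
proof (induction i)
  case 0 show ?case by simp
next
  case (Suc i)
  hence "g i \<le> g 0" by simp
  moreover have "g (Suc i) \<le> g i" using assms Suc.prems by blast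
  ultimately show ?case by linarith
qed

lemma amgm2:
  fixes x y :: real
  shows "x * y \<le> (x^2 + y^2) / 2"
proof -
  have "0 \<le> (x - y)^2" by simp
  also have "(x - y)^2 = x^2 - 2 * (x * y) + y^2" by (simp add: power2_diff mult.assoc)
  finally have "2 * (x * y) \<le> x^2 + y^2" by linarith
  thus ?thesis by (auto simp: field_simps)
qed

lemma sqrt_prod_le:
  fixes a b l :: real
  assumes "0 \<le> a" "0 \<le> b" "0 < l"
  shows "sqrt (a * b) \<le> (l * a + b / l) / 2"
proof -
  have "sqrt (a*b) = sqrt (l*a) * sqrt (b/l)" using assms
    by (simp add: real_sqrt_mult[symmetric])
  also have "\<dots> \<le> ((sqrt (l*a))^2 + (sqrt (b/l))^2) / 2"
    by (rule amgm2)
  also have "\<dots> = (l * a + b / l) / 2" using assms by simp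
  finally show ?thesis .
qed

lemma sqrt_sum_le:
  fixes f p :: "nat \<Rightarrow> real"
  assumes pos: "\<forall>i<q. f i > 0 \<and> p i > 0" and F: "(\<Sum>i<q. f i) = F" and P: "(\<Sum>i<q. p i) = P"
    and "F > 0" "P > 0"
  shows "(\<Sum>i<q. sqrt (f i * p i)) \<le> sqrt (F * P)"
proof -
  define l where "l = sqrt P / sqrt F"
  have l0: "l > 0" using assms by (simp add: l_def)
  have "(\<Sum>i<q. sqrt (f i * p i)) \<le> (\<Sum>i<q. (l * f i + p i / l) / 2)"
    using pos l0 by (intro sum_mono sqrt_prod_le) auto
  also have "\<dots> = (l * F + P / l) / 2"
    using F P by (simp add: sum_divide_distrib[symmetric] sum.distrib sum_distrib_left[symmetric] add_divide_distrib)
  also have "\<dots> = sqrt (F * P)" using assms unfolding l_def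
    by (simp add: real_sqrt_mult field_simps)
  finally show ?thesis .
qed

lemma realize:
  fixes s :: "nat \<Rightarrow> real"
  assumes "F > 0" "P > 0" and spos: "\<forall>i<q. s i > 0" and ssum: "(\<Sum>i<q. s i) = sqrt (F * P)"
    and mono: "\<forall>i. Suc i < q \<longrightarrow> s (Suc i) \<le> s i" and s0: "(s 0)^2 \<le> m"
  shows "(\<Sum>i<q. (s i)^2) \<in> feasible_sums q F P m"
proof -
  define S where "S = sqrt (F * P)"
  have S0: "S > 0" using assms by (simp add: S_def)
  have SS: "S * S = F * P" using assms unfolding S_def by simp
  define f where "f i = s i * F / S" for i
  define p where "p i = s i * P / S" for i
  have fp: "f i * p i = (s i)^2" for i
    unfolding f_def p_def using SS S0 assms by (simp add: field_simps power2_eq_square)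
  have "(\<Sum>i<q. f i) = F" unfolding f_def using ssum S0 assms
    by (simp add: sum_divide_distrib[symmetric] sum_distrib_right[symmetric] S_def)
  moreover have "(\<Sum>i<q. p i) = P" unfolding p_def using ssum S0 assms
    by (simp add: sum_divide_distrib[symmetric] sum_distrib_right[symmetric] S_def)
  moreover have "\<forall>i<q. f i > 0 \<and> p i > 0" using spos S0 assms by (simp add: f_def p_def)
  moreover have "\<forall>i. Suc i < q \<longrightarrow> f (Suc i) * p (Suc i) \<le> f i * p i"
    unfolding fp using mono spos
    by (metis Suc_lessD less_imp_le power_mono)
  moreover have "f 0 * p 0 \<le> m" using s0 fp by simp
  moreover have "(\<Sum>i<q. (s i)^2) = (\<Sum>i<q. f i * p i)" by (simp add: fp)
  ultimately show ?thesis unfolding feasible_sums_def by blast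
qed


lemma approach:
  fixes u q :: nat and F P m t e :: real
  assumes F0: "F > 0" and P0: "P > 0" and m0: "m > 0" and uq: "u < q"
    and t0: "0 < t" and tm: "t \<le> sqrt m" and Sd: "sqrt (F * P) = real u * sqrt m + t" and e0: "e > 0"
  shows "\<exists>x\<in>feasible_sums q F P m. x > real u * m + t^2 - e"
proof -
  define k where "k = q - u"
  have k1: "real k \<ge> 1" using uq by (simp add: k_def)
  define d where "d = min (t / real k) (e / (2 * t * real k + 1))"
  have "0 \<le> 2 * t * real k" using t0 k1 by simp
  hence den: "2 * t * real k + 1 > 0" by linarith
  have d0: "d > 0" using t0 k1 e0 den by (simp add: d_def)
  have "d \<le> t / real k" by (simp add: d_def)
  hence "real k * d \<le> real k * (t / real k)" using k1 by (intro mult_left_mono) auto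
  hence dk: "real k * d \<le> t" using k1 by simp
  have "d \<le> e / (2 * t * real k + 1)" by (simp add: d_def)
  hence "(2 * t * real k + 1) * d \<le> (2 * t * real k + 1) * (e / (2 * t * real k + 1))"
    using den by (intro mult_left_mono) auto
  hence de: "(2 * t * real k + 1) * d \<le> e" using den by simp
  define su where "su = t - (real k - 1) * d"
  have su_ge: "su \<ge> d" using dk unfolding su_def by (simp add: algebra_simps)
  have "0 \<le> (real k - 1) * d" using k1 d0 by simp
  hence su_le: "su \<le> sqrt m" using tm unfolding su_def by linarith
  define s where "s i = (if i < u then sqrt m else if i = u then su else d)" for i
  have spos: "\<forall>i<q. s i > 0" using m0 d0 su_ge by (auto simp: s_def)
  have mono: "\<forall>i. Suc i < q \<longrightarrow> s (Suc i) \<le> s i"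
    using su_le su_ge by (auto simp: s_def)
  have s0: "(s 0)^2 \<le> m"
  proof -
    have "0 \<le> s 0" "s 0 \<le> sqrt m" using su_le su_ge d0 m0 by (auto simp: s_def)
    hence "(s 0)^2 \<le> (sqrt m)^2" by (intro power_mono) auto
    thus ?thesis using m0 by simp
  qed
  have split: "(\<Sum>i<q. g i) = (\<Sum>i<Suc u. g i) + (\<Sum>i=Suc u..<q. g i)" for g :: "nat \<Rightarrow> real"
  proof -
    have "{..<q} = {..<Suc u} \<union> {Suc u..<q}" using uq by auto
    moreover have d: "{..<Suc u} \<inter> {Suc u..<q} = {}" by auto
    ultimately show ?thesis
      using sum.union_disjoint[OF finite_lessThan finite_atLeastLessThan d, of g] by simp
  qed
  have lowsum: "(\<Sum>i<u. s i) = real u * sqrt m" by (simp add: s_def)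
  have lowsq: "(\<Sum>i<u. (s i)^2) = real u * m" using m0 by (simp add: s_def)
  have highsum: "(\<Sum>i=Suc u..<q. s i) = (real k - 1) * d"
  proof -
    have "(\<Sum>i=Suc u..<q. s i) = (\<Sum>i=Suc u..<q. d)" by (intro sum.cong) (auto simp: s_def)
    also have "\<dots> = real (q - Suc u) * d" by simp
    also have "real (q - Suc u) = real k - 1" using uq by (simp add: k_def of_nat_diff)
    finally show ?thesis .
  qed
  have su_eq: "s u = su" by (simp add: s_def)
  have "(\<Sum>i<Suc u. s i) = real u * sqrt m + su" using lowsum su_eq by simp
  hence ssum: "(\<Sum>i<q. s i) = sqrt (F * P)"
    using split[of s] highsum Sd su_def by linarith
  have mem: "(\<Sum>i<q. (s i)^2) \<in> feasible_sums q F P m"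
    using realize[OF F0 P0 spos ssum mono s0] .
  have "(\<Sum>i<q. (s i)^2) \<ge> (\<Sum>i<Suc u. (s i)^2)"
    using split[of "\<lambda>i. (s i)^2"] by (simp add: sum_nonneg)
  also have "(\<Sum>i<Suc u. (s i)^2) = real u * m + su^2" using lowsq su_eq by simp
  finally have v: "(\<Sum>i<q. (s i)^2) \<ge> real u * m + su^2" .
  have "su^2 = t^2 - 2 * t * ((real k - 1) * d) + ((real k - 1) * d)^2" unfolding su_def
    by (simp add: power2_diff)
  moreover have "((real k - 1) * d)^2 \<ge> 0" by simp
  ultimately have "su^2 \<ge> t^2 - 2 * t * ((real k - 1) * d)" by linarith
  moreover have "2 * t * ((real k - 1) * d) < e"
  proof -
    have "2 * t * ((real k - 1) * d) \<le> 2 * t * real k * d" using t0 d0 by (simp add: algebra_simps)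
    also have "\<dots> < (2 * t * real k + 1) * d" using d0 by (simp add: algebra_simps)
    finally show ?thesis using de by linarith
  qed
  ultimately have "(\<Sum>i<q. (s i)^2) > real u * m + t^2 - e" using v by linarith
  thus ?thesis using mem by blast
qed

lemma attain:
  fixes q :: nat and F P m :: real
  assumes q2: "q \<ge> 2" and F0: "F > 0" and P0: "P > 0" and m0: "m > 0" and mle: "m \<le> F * P / (real q)^2"
  shows "m * real q \<in> feasible_sums q F P m"
proof -
  define c where "c = (real q - 1)^2"
  define g where "g x = 1 / x + c / (F - x)" for x :: real
  define b where "b = F / real q"
  define a where "a = min b (m / P)"
  have q1: "real q - 1 > 0" using q2 by simp
  have bF: "b < F" "b > 0" using F0 q2 by (auto simp: b_def field_simps)
  have a0: "a > 0" "a \<le> b" using bF m0 P0 by (auto simp: a_def)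
  have gb: "g b = real q ^ 2 / F"
  proof -
    have "F - b = F * (real q - 1) / real q" using q2 by (simp add: b_def field_simps)
    thus ?thesis using q1 q2 F0 by (simp add: g_def b_def c_def field_simps power2_eq_square)
  qed
  have mle': "m * real q ^ 2 \<le> F * P" using mle q2 by (simp add: field_simps)
  have e: "F * (m * g b) = m * real q ^ 2" using gb F0 by (simp add: field_simps)
  have "F * (m * g b) \<le> F * P" using e mle' by linarith
  hence "m * g b \<le> P" using F0 by simp
  hence gbP: "g b \<le> P / m" using m0 by (simp add: pos_le_divide_eq mult.commute)
  have gaP: "P / m \<le> g a"
  proof -
    have "a \<le> m / P" by (simp add: a_def)
    hence "a * P \<le> m" using P0 by (simp add: le_divide_eq)
    hence "P / m \<le> 1 / a" using a0 m0 by (simp add: field_simps)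
    moreover have "c / (F - a) \<ge> 0" using a0 bF by (simp add: c_def)
    ultimately show ?thesis by (simp add: g_def)
  qed
  have cont: "\<forall>x. a \<le> x \<and> x \<le> b \<longrightarrow> isCont g x"
    using a0 bF unfolding g_def by (auto intro!: continuous_intros)
  obtain x where x: "a \<le> x" "x \<le> b" "g x = P / m"
    using IVT2[of g b "P/m" a, OF gbP gaP a0(2) cont] by blast
  have x0: "x > 0" "x < F" using x a0 bF by auto
  define r where "r = q - 1"
  have qr: "q = Suc r" and rr: "real r = real q - 1" using q2 by (auto simp: r_def of_nat_diff)
  define f where "f i = (if i = 0 then x else (F - x) / (real q - 1))" for i :: nat
  define p where "p i = m / f i" for i :: nat
  have fpos: "\<forall>i<q. f i > 0" using x0 q1 by (simp add: f_def)
  have fp: "f i * p i = m" if "i < q" for i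
  proof -
    have "f i > 0" using fpos that by blast
    thus ?thesis by (simp add: p_def)
  qed
  have sf: "(\<Sum>i<q. f i) = F" using q1 unfolding qr sum.lessThan_Suc_shift
    by (simp add: f_def rr)
  have sp: "(\<Sum>i<q. p i) = P"
  proof -
    have "(\<Sum>i<q. p i) = m / x + real r * (m * (real q - 1) / (F - x))"
      unfolding qr sum.lessThan_Suc_shift using rr by (simp add: p_def f_def)
    also have "\<dots> = m * g x" using q1 x0
      by (simp add: rr g_def c_def field_simps power2_eq_square)
    also have "\<dots> = P" using x m0 by simp
    finally show ?thesis .
  qed
  have "(\<Sum>i<q. f i * p i) = m * real q" using fp by simp
  moreover have "\<forall>i<q. f i > 0 \<and> p i > 0" using fpos m0 by (simp add: p_def)
  moreover have "\<forall>i. Suc i < q \<longrightarrow> f (Suc i) * p (Suc i) \<le> f i * p i" using fp by simp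
  moreover have "f 0 * p 0 \<le> m" using fp q2 by simp
  ultimately show ?thesis using sf sp unfolding feasible_sums_def
    by (intro CollectI exI[of _ f] exI[of _ p]) auto
qed


lemma feas_elim:
  assumes "x \<in> feasible_sums q F P m"
  obtains f p where "\<forall>i<q. f i > 0 \<and> p i > 0" "(\<Sum>i<q. f i) = F" "(\<Sum>i<q. p i) = P"
    "\<forall>i. Suc i < q \<longrightarrow> f (Suc i) * p (Suc i) \<le> f i * p i" "f 0 * p 0 \<le> m"
    "x = (\<Sum>i<q. f i * p i)"
  using assms unfolding feasible_sums_def mem_Collect_eq
  apply -
  apply (erule exE)+
  apply (erule conjE)+
  apply (rule that)
  apply assumption+
  done

lemma ub_gen:
  fixes u :: nat and t :: real
  assumes x: "x \<in> feasible_sums q F P m" and F0: "F > 0" and P0: "P > 0"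
    and t0: "0 \<le> t" and tm: "t \<le> sqrt m" and Sd: "sqrt (F * P) = real u * sqrt m + t"
  shows "x \<le> real u * m + t^2"
proof -
  obtain f p where pos: "\<forall>i<q. f i > 0 \<and> p i > 0" and sf: "(\<Sum>i<q. f i) = F"
    and sp: "(\<Sum>i<q. p i) = P" and mono: "\<forall>i. Suc i < q \<longrightarrow> f (Suc i) * p (Suc i) \<le> f i * p i"
    and f0: "f 0 * p 0 \<le> m" and xe: "x = (\<Sum>i<q. f i * p i)"
    by (rule feas_elim[OF x])
  have m0: "m \<ge> 0"
  proof (rule ccontr)
    assume "\<not> m \<ge> 0"
    hence "sqrt m < 0" by simp
    thus False using t0 tm by linarith
  qed
  define s where "s i = sqrt (f i * p i)" for i
  have bnd: "\<forall>i\<in>{..<q}. 0 \<le> s i \<and> s i \<le> sqrt m"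
  proof
    fix i assume i: "i \<in> {..<q}"
    have "f i * p i \<le> f 0 * p 0" using le_first[of q "\<lambda>i. f i * p i" i] mono i by auto
    thus "0 \<le> s i \<and> s i \<le> sqrt m" using f0 pos i by (auto simp: s_def)
  qed
  have ssum: "sum s {..<q} \<le> sqrt (F * P)" unfolding s_def by (rule sqrt_sum_le[OF pos sf sp F0 P0])
  have "(\<Sum>i\<in>{..<q}. (s i)^2) \<le> real u * (sqrt m)^2 + t^2"
    by (rule key_ineq[OF _ bnd ssum Sd t0 tm]) simp
  moreover have "(\<Sum>i\<in>{..<q}. (s i)^2) = x" unfolding xe s_def
    using pos by (intro sum.cong) (auto simp: less_imp_le)
  ultimately show ?thesis using m0 by simp
qed

lemma ub_q:
  assumes x: "x \<in> feasible_sums q F P m"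
  shows "x \<le> m * real q"
proof -
  obtain f p where pos: "\<forall>i<q. f i > 0 \<and> p i > 0" and sf: "(\<Sum>i<q. f i) = F"
    and sp: "(\<Sum>i<q. p i) = P" and mono: "\<forall>i. Suc i < q \<longrightarrow> f (Suc i) * p (Suc i) \<le> f i * p i"
    and f0: "f 0 * p 0 \<le> m" and xe: "x = (\<Sum>i<q. f i * p i)"
    by (rule feas_elim[OF x])
  have "x \<le> (\<Sum>i<q. m)" unfolding xe
  proof (rule sum_mono)
    fix i assume "i \<in> {..<q}"
    hence "f i * p i \<le> f 0 * p 0" using le_first[of q "\<lambda>i. f i * p i" i] mono by auto
    thus "f i * p i \<le> m" using f0 by linarith
  qed
  thus ?thesis by (simp add: mult.commute)
qed

lemma sup_by_approx:
  fixes X :: "real set"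
  assumes ub: "\<And>x. x \<in> X \<Longrightarrow> x \<le> V" and ap: "\<And>e. e > 0 \<Longrightarrow> \<exists>x\<in>X. x > V - e"
  shows "Sup X = V"
proof (rule cSup_eq_non_empty)
  show "X \<noteq> {}" using ap[of 1] by auto
  show "\<And>x. x \<in> X \<Longrightarrow> x \<le> V" by (rule ub)
  fix y assume y: "\<And>x. x \<in> X \<Longrightarrow> x \<le> y"
  show "V \<le> y"
  proof (rule ccontr)
    assume "\<not> V \<le> y"
    then obtain x where "x \<in> X" "x > V - (V - y)" using ap[of "V - y"] by auto
    thus False using y by force
  qed
qed

lemma case_u:
  fixes u q :: nat and F P m t :: real
  assumes F0: "F > 0" and P0: "P > 0" and m0: "m > 0" and uq: "u < q"
    and t0: "0 < t" and tm: "t \<le> sqrt m" and Sd: "sqrt (F * P) = real u * sqrt m + t"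
  shows "Sup (feasible_sums q F P m) = real u * m + t^2"
  apply (rule sup_by_approx)
  using ub_gen[OF _ F0 P0 _ tm Sd] t0 apply simp
  using approach[OF F0 P0 m0 uq t0 tm Sd] by blast

theorem lemmaA2:
  fixes q :: nat and F P m :: real
  assumes "q \<ge> 2" and "F > 0" and "P > 0" and "m > 0"
  shows "(F * P \<le> m \<longrightarrow> Sup (feasible_sums q F P m) = F * P)
     \<and> (\<forall>u\<in>{1..q-1}. F * P / (real u + 1)^2 \<le> m \<and> m < F * P / (real u)^2 \<longrightarrow>
           Sup (feasible_sums q F P m) = real u * m + (sqrt (F * P) - real u * sqrt m)^2)
     \<and> (m < F * P / (real q)^2 \<longrightarrow> Sup (feasible_sums q F P m) = m * real q)"
proof (intro conjI impI ballI)
  have FP: "F * P > 0" using assms by simp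
  {
    assume h: "F * P \<le> m"
    have "sqrt (F * P) \<le> sqrt m" using h by simp
    moreover have "sqrt (F * P) > 0" using FP by simp
    ultimately have "Sup (feasible_sums q F P m) = real 0 * m + (sqrt (F * P))^2"
      using assms by (intro case_u) auto
    thus "Sup (feasible_sums q F P m) = F * P" using FP by simp
  }
  {
    fix u assume u: "u \<in> {1..q-1}" and h: "F * P / (real u + 1)^2 \<le> m \<and> m < F * P / (real u)^2"
    have u1: "real u \<ge> 1" and uq: "u < q" using u assms(1) by auto
    have "(real u)^2 * m < F * P" using h u1 by (simp add: field_simps)
    hence "sqrt ((real u)^2 * m) < sqrt (F * P)" by simp
    hence lt: "real u * sqrt m < sqrt (F * P)" by (simp add: real_sqrt_mult)
    have "F * P \<le> (real u + 1)^2 * m" using h u1 by (simp add: field_simps)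
    hence "sqrt (F * P) \<le> sqrt ((real u + 1)^2 * m)" by simp
    hence le: "sqrt (F * P) \<le> (real u + 1) * sqrt m" by (simp add: real_sqrt_mult)
    show "Sup (feasible_sums q F P m) = real u * m + (sqrt (F * P) - real u * sqrt m)^2"
      using assms lt le uq by (intro case_u) (auto simp: algebra_simps)
  }
  {
    assume h: "m < F * P / (real q)^2"
    have mem: "m * real q \<in> feasible_sums q F P m" using h assms by (intro attain) auto
    show "Sup (feasible_sums q F P m) = m * real q"
      by (rule cSup_eq_maximum[OF mem]) (rule ub_q)
  }
qed

end
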